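(* Assume (C1) and (C2). For any $u\in\mathcal{D}$ with $u^+\neq0$ and $u^-\neq0$, there exists a unique pair of positive constants $(s_0,t_0)$ such that $s_0u^++t_0u^-\in\mathcal{M}$.
   Context: Fix real numbers $p,q,r$ with $1<p<q$, $\frac p2$ a positive integer, and $r\ge1$, and functions $a,b,c:\mathbb{Z}\to(0,+\infty)$. Conditions: - (C1) There is $b_0>0$ with $b(n)\ge b_0$ for all $n$ and $b(n)\to+\infty$ as $|n|\to\infty$. - (C2) There is $c_0>0$ with $c(n)\le c_0$ for all $n$ and $\sum_n c(n)<+\infty$. Notation for a real sequence $u=(u(n))_{n\in\mathbb{Z}}$: $\Delta u(n)=u(n+1)-u(n)$, $u^+(n)=\max\{u(n),0\}$, $u^-(n)=\min\{u(n),0\}$. Spaces: - $E$ is the set of real sequences $u$ with $\|u\|:=\big(\sum_n[a(n)|\Delta u(n)|^p+b(n)|u(n)|^p]\big)^{1/p}<\infty$. - $\mathcal{D}=\{u\in E:\sum_n c(n)|u(n)|^q\ln|u(n)|^r<+\infty\}$, where terms with $u(n)=0$ are read as $0$. For $u,v\in\mathcal{D}$: $$\langle I'(u),v\rangle=\sum_n[a(n)|\Delta u(n)|^{p-2}\Delta u(n)\Delta v(n)+b(n)|u(n)|^{p-2}u(n)v(n)]-\sum_n c(n)|u(n)|^{q-2}u(n)v(n)\ln|u(n)|^r.$$ $\mathcal{M}=\{u\in\mathcal{D}:u^+\ne0,\ u^-\neq0,\ \langle I'(u),u^+\rangle=0,\ \langle I'(u),u^-\rangle=0\}$. *)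

theory Defs
  imports "HOL-Analysis.Analysis"
begin

definition fdiff :: "(int \<Rightarrow> real) \<Rightarrow> int \<Rightarrow> real" where
  "fdiff u n = u (n + 1) - u n"

definition pos_part :: "(int \<Rightarrow> real) \<Rightarrow> int \<Rightarrow> real" where
  "pos_part u n = max (u n) 0"

definition neg_part :: "(int \<Rightarrow> real) \<Rightarrow> int \<Rightarrow> real" where
  "neg_part u n = min (u n) 0"

definition spaceE :: "(int \<Rightarrow> real) \<Rightarrow> (int \<Rightarrow> real) \<Rightarrow> real \<Rightarrow> (int \<Rightarrow> real) set" where
  "spaceE a b p = {u. (\<lambda>n. a n * \<bar>fdiff u n\<bar> powr p + b n * \<bar>u n\<bar> powr p) summable_on UNIV}"

text \<open>The set D. Here ln |u|^r is read as ln (|u|^r); for u n = 0 the term is 0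
  (in Isabelle 0 powr q = 0 and ln 0 = 0).\<close>
definition spaceD :: "(int \<Rightarrow> real) \<Rightarrow> (int \<Rightarrow> real) \<Rightarrow> (int \<Rightarrow> real) \<Rightarrow> real \<Rightarrow> real \<Rightarrow> real
    \<Rightarrow> (int \<Rightarrow> real) set" where
  "spaceD a b c p q r = {u \<in> spaceE a b p.
      (\<lambda>n. c n * \<bar>u n\<bar> powr q * ln (\<bar>u n\<bar> powr r)) summable_on UNIV}"

definition dI :: "(int \<Rightarrow> real) \<Rightarrow> (int \<Rightarrow> real) \<Rightarrow> (int \<Rightarrow> real) \<Rightarrow> real \<Rightarrow> real \<Rightarrow> real
    \<Rightarrow> (int \<Rightarrow> real) \<Rightarrow> (int \<Rightarrow> real) \<Rightarrow> real" where
  "dI a b c p q r u v =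
     (\<Sum>\<^sub>\<infinity>n. a n * \<bar>fdiff u n\<bar> powr (p - 2) * fdiff u n * fdiff v n
              + b n * \<bar>u n\<bar> powr (p - 2) * u n * v n)
   - (\<Sum>\<^sub>\<infinity>n. c n * \<bar>u n\<bar> powr (q - 2) * u n * v n * ln (\<bar>u n\<bar> powr r))"

definition nehariM :: "(int \<Rightarrow> real) \<Rightarrow> (int \<Rightarrow> real) \<Rightarrow> (int \<Rightarrow> real) \<Rightarrow> real \<Rightarrow> real \<Rightarrow> real
    \<Rightarrow> (int \<Rightarrow> real) set" where
  "nehariM a b c p q r = {u \<in> spaceD a b c p q r.
      pos_part u \<noteq> (\<lambda>_. 0) \<and> neg_part u \<noteq> (\<lambda>_. 0) \<and>
      dI a b c p q r u (pos_part u) = 0 \<and> dI a b c p q r u (neg_part u) = 0}"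

end

theory Submission
  imports Defs "HOL-Analysis.Analysis"
begin

definition Xp :: "(int \<Rightarrow> real) \<Rightarrow> int \<Rightarrow> real" where "Xp u n = \<bar>fdiff (pos_part u) n\<bar>"
definition Yn :: "(int \<Rightarrow> real) \<Rightarrow> int \<Rightarrow> real" where "Yn u n = \<bar>fdiff (neg_part u) n\<bar>"
definition Pp :: "(int \<Rightarrow> real) \<Rightarrow> int \<Rightarrow> real" where "Pp u n = pos_part u n"
definition wst :: "(int \<Rightarrow> real) \<Rightarrow> real \<Rightarrow> real \<Rightarrow> int \<Rightarrow> real" where
  "wst u s t = (\<lambda>n. s * pos_part u n + t * neg_part u n)"

lemma Pp_nonneg: "Pp u n \<ge> 0" unfolding Pp_def pos_part_def by simp

lemma pos_wst: "s > 0 \<Longrightarrow> t > 0 \<Longrightarrow> pos_part (wst u s t) = (\<lambda>n. s * pos_part u n)"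
  unfolding pos_part_def neg_part_def wst_def
  by (rule ext) (auto simp: max_def min_def mult_le_0_iff zero_le_mult_iff)

lemma neg_wst: "s > 0 \<Longrightarrow> t > 0 \<Longrightarrow> neg_part (wst u s t) = (\<lambda>n. t * neg_part u n)"
  unfolding pos_part_def neg_part_def wst_def
  by (rule ext) (auto simp: max_def min_def mult_le_0_iff zero_le_mult_iff)

lemma fdiff_wst: "fdiff (wst u s t) n = s * fdiff (pos_part u) n + t * fdiff (neg_part u) n"
  unfolding fdiff_def wst_def by (simp add: algebra_simps)

lemma same_sign:
  "(0 \<le> fdiff (pos_part u) n \<and> 0 \<le> fdiff (neg_part u) n) \<or>
   (fdiff (pos_part u) n \<le> 0 \<and> fdiff (neg_part u) n \<le> 0)"
  unfolding fdiff_def pos_part_def neg_part_def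
  by (cases "u n \<le> u (n + 1)") (auto simp: max_def min_def)

lemma abs_fdiff_wst:
  assumes "s \<ge> 0" "t \<ge> 0"
  shows "\<bar>fdiff (wst u s t) n\<bar> = s * Xp u n + t * Yn u n"
  using same_sign[of u n]
proof
  assume h: "0 \<le> fdiff (pos_part u) n \<and> 0 \<le> fdiff (neg_part u) n"
  hence "0 \<le> s * fdiff (pos_part u) n + t * fdiff (neg_part u) n"
    using assms by (intro add_nonneg_nonneg mult_nonneg_nonneg) auto
  thus ?thesis using h unfolding fdiff_wst Xp_def Yn_def by simp
next
  assume h: "fdiff (pos_part u) n \<le> 0 \<and> fdiff (neg_part u) n \<le> 0"
  hence "s * fdiff (pos_part u) n + t * fdiff (neg_part u) n \<le> 0"
    using assms by (intro add_nonpos_nonpos mult_nonneg_nonpos) auto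
  thus ?thesis using h unfolding fdiff_wst Xp_def Yn_def by simp
qed

lemma fdiff_u: "fdiff u n = fdiff (pos_part u) n + fdiff (neg_part u) n"
  unfolding fdiff_def pos_part_def neg_part_def by (simp add: max_def min_def)

lemma wst11: "wst u 1 1 = u"
  unfolding wst_def pos_part_def neg_part_def by (rule ext) (simp add: max_def min_def)

lemma abs_fdiff_u: "\<bar>fdiff u n\<bar> = Xp u n + Yn u n"
  using abs_fdiff_wst[of 1 1 u n] unfolding wst11 by simp

lemma fdiff_mul:
  assumes "s > 0" "t > 0"
  shows "fdiff (wst u s t) n * fdiff (pos_part (wst u s t)) n = s * Xp u n * (s * Xp u n + t * Yn u n)"
proof -
  define D1 where "D1 = fdiff (pos_part u) n"
  define D2 where "D2 = fdiff (neg_part u) n"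
  have h: "fdiff (pos_part (wst u s t)) n = s * D1"
    unfolding pos_wst[OF assms] fdiff_def D1_def by (simp add: algebra_simps)
  have L: "fdiff (wst u s t) n * fdiff (pos_part (wst u s t)) n = (s * D1 + t * D2) * (s * D1)"
    unfolding h fdiff_wst D1_def D2_def ..
  from same_sign[of u n] show ?thesis
  proof
    assume "0 \<le> fdiff (pos_part u) n \<and> 0 \<le> fdiff (neg_part u) n"
    hence X: "Xp u n = D1" "Yn u n = D2" unfolding Xp_def Yn_def D1_def D2_def by auto
    show ?thesis unfolding L X by (simp add: algebra_simps)
  next
    assume "fdiff (pos_part u) n \<le> 0 \<and> fdiff (neg_part u) n \<le> 0"
    hence X: "Xp u n = - D1" "Yn u n = - D2" unfolding Xp_def Yn_def D1_def D2_def by auto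
    show ?thesis unfolding L X by (simp add: algebra_simps)
  qed
qed

lemma pw1: "\<bar>x::real\<bar> powr (e - 1) * \<bar>x\<bar> = \<bar>x\<bar> powr e"
proof (cases "x = 0")
  case False
  have "\<bar>x\<bar> powr (e - 1) * \<bar>x\<bar> powr 1 = \<bar>x\<bar> powr (e - 1 + 1)"
    by (rule powr_add[symmetric])
  thus ?thesis using False by simp
qed simp

lemma pw2: "\<bar>x::real\<bar> powr (e - 2) * x * x = \<bar>x\<bar> powr e"
proof -
  have ee: "e - 1 - 1 = e - 2" by simp
  have h1: "\<bar>x\<bar> powr (e - 2) * \<bar>x\<bar> = \<bar>x\<bar> powr (e - 1)" using pw1[of x "e - 1"] unfolding ee .
  have "\<bar>x\<bar> powr (e - 2) * x * x = (\<bar>x\<bar> powr (e - 2) * \<bar>x\<bar>) * \<bar>x\<bar>"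
    by (simp add: abs_mult_self_eq mult.assoc)
  also have "\<dots> = \<bar>x\<bar> powr e" unfolding h1 by (rule pw1)
  finally show ?thesis .
qed

lemma term1:
  assumes s: "s > 0" and t: "t > 0"
  shows "a n * \<bar>fdiff (wst u s t) n\<bar> powr (p - 2) * fdiff (wst u s t) n * fdiff (pos_part (wst u s t)) n
      + b n * \<bar>wst u s t n\<bar> powr (p - 2) * wst u s t n * pos_part (wst u s t) n
    = s * (a n * Xp u n * (s * Xp u n + t * Yn u n) powr (p - 1)) + s powr p * (b n * Pp u n powr p)"
proof -
  define Z where "Z = fdiff (wst u s t) n"
  have aZ: "\<bar>Z\<bar> = s * Xp u n + t * Yn u n" unfolding Z_def using abs_fdiff_wst s t by simp
  have A: "a n * \<bar>Z\<bar> powr (p - 2) * Z * fdiff (pos_part (wst u s t)) n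
      = s * (a n * Xp u n * (s * Xp u n + t * Yn u n) powr (p - 1))"
  proof -
    have "a n * \<bar>Z\<bar> powr (p - 2) * Z * fdiff (pos_part (wst u s t)) n
        = a n * \<bar>Z\<bar> powr (p - 2) * (s * Xp u n * \<bar>Z\<bar>)"
      using fdiff_mul[OF s t, of u n] aZ unfolding Z_def by (simp add: mult.assoc)
    also have "\<dots> = s * a n * Xp u n * (\<bar>Z\<bar> powr ((p - 1) - 1) * \<bar>Z\<bar>)"
      by (simp add: algebra_simps)
    also have "\<dots> = s * a n * Xp u n * \<bar>Z\<bar> powr (p - 1)" by (simp only: pw1)
    finally show ?thesis using aZ by (simp add: algebra_simps)
  qed
  have B: "b n * \<bar>wst u s t n\<bar> powr (p - 2) * wst u s t n * pos_part (wst u s t) n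
      = s powr p * (b n * Pp u n powr p)"
  proof (cases "u n > 0")
    case True
    have w: "wst u s t n = s * u n" "pos_part (wst u s t) n = s * u n" "Pp u n = u n"
      using True s unfolding wst_def pos_part_def neg_part_def Pp_def by auto
    have "b n * \<bar>wst u s t n\<bar> powr (p - 2) * wst u s t n * pos_part (wst u s t) n
        = b n * (\<bar>s * u n\<bar> powr (p - 2) * (s * u n) * (s * u n))" unfolding w by (simp add: mult.assoc)
    also have "\<dots> = b n * \<bar>s * u n\<bar> powr p" by (simp only: pw2)
    also have "\<dots> = b n * (s powr p * u n powr p)" using True s by (simp add: powr_mult)
    finally show ?thesis using w by simp
  next
    case False
    have w: "pos_part (wst u s t) n = 0" "Pp u n = 0"
      using False s t unfolding pos_wst[OF s t] unfolding pos_part_def Pp_def by auto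
    show ?thesis unfolding w by simp
  qed
  show ?thesis unfolding Z_def[symmetric] A B by (rule refl)
qed

lemma term2:
  assumes s: "s > 0" and t: "t > 0"
  shows "c n * \<bar>wst u s t n\<bar> powr (q - 2) * wst u s t n * pos_part (wst u s t) n * ln (\<bar>wst u s t n\<bar> powr r)
    = s powr q * (r * ln s * (c n * Pp u n powr q) + c n * Pp u n powr q * ln (Pp u n powr r))"
proof (cases "u n > 0")
  case True
  have w: "wst u s t n = s * u n" "pos_part (wst u s t) n = s * u n" "Pp u n = u n"
    using True s unfolding wst_def pos_part_def neg_part_def Pp_def by auto
  have su: "s * u n > 0" using True s by simp
  have "c n * \<bar>wst u s t n\<bar> powr (q - 2) * wst u s t n * pos_part (wst u s t) n * ln (\<bar>wst u s t n\<bar> powr r)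
      = c n * (\<bar>s * u n\<bar> powr (q - 2) * (s * u n) * (s * u n)) * ln (\<bar>s * u n\<bar> powr r)"
    unfolding w by (simp add: mult.assoc)
  also have "\<dots> = c n * \<bar>s * u n\<bar> powr q * ln (\<bar>s * u n\<bar> powr r)" by (simp only: pw2)
  also have "\<dots> = c n * (s powr q * u n powr q) * (r * ln s + r * ln (u n))"
    using True s su by (simp add: powr_mult ln_powr ln_mult)
  also have "\<dots> = s powr q * (r * ln s * (c n * u n powr q) + c n * u n powr q * ln (u n powr r))"
    using True by (simp add: ln_powr algebra_simps distrib_left)
  finally show ?thesis using w by simp
next
  case False
  have w: "pos_part (wst u s t) n = 0" "Pp u n = 0"
    using False s t unfolding pos_wst[OF s t] unfolding pos_part_def Pp_def by auto
  show ?thesis unfolding w by simp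
qed

lemma neg_fun_pos: "pos_part (\<lambda>n. - u n) = (\<lambda>n. - neg_part u n)"
  unfolding pos_part_def neg_part_def by (rule ext) (simp add: max_def min_def)
lemma neg_fun_neg: "neg_part (\<lambda>n. - u n) = (\<lambda>n. - pos_part u n)"
  unfolding pos_part_def neg_part_def by (rule ext) (simp add: max_def min_def)

lemma wst_neg: "wst (\<lambda>n. - u n) t s = (\<lambda>n. - wst u s t n)"
  unfolding wst_def neg_fun_pos neg_fun_neg by (rule ext) simp

lemma dI_neg: "dI a b c p q r (\<lambda>n. - w n) (\<lambda>n. - v n) = dI a b c p q r w v"
  unfolding dI_def fdiff_def by (simp add: algebra_simps abs_minus_commute)

lemma dI_negpart: "dI a b c p q r w (neg_part w) = dI a b c p q r (\<lambda>n. - w n) (pos_part (\<lambda>n. - w n))"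
  unfolding neg_fun_pos dI_neg by simp

definition gfun :: "real \<Rightarrow> real \<Rightarrow> real \<Rightarrow> real \<Rightarrow> real" where
  "gfun e A B s = s powr e * (A * ln s + B)"

definition ginv :: "real \<Rightarrow> real \<Rightarrow> real \<Rightarrow> real \<Rightarrow> real" where
  "ginv e A B y = (THE s. s > exp (- B / A) \<and> gfun e A B s = y)"

lemma g_pos_imp:
  assumes "A > 0" "s > 0" "gfun e A B s > 0"
  shows "exp (- B / A) < s"
proof -
  have "s powr e > 0" using assms by simp
  hence "A * ln s + B > 0" using assms(3) unfolding gfun_def
    by (simp add: zero_less_mult_iff)
  hence "ln s > - B / A" using assms(1) by (simp add: field_simps)
  hence "exp (- B / A) < exp (ln s)" by simp
  thus ?thesis using assms(2) by simp
qed

lemma g_lin_pos: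
  fixes A B x :: real
  assumes "A > 0" "exp (- B / A) < x"
  shows "A * ln x + B > 0"
proof -
  have x: "x > 0" using assms(2) exp_gt_zero[of "- B / A"] by linarith
  have "ln (exp (- B / A)) < ln x" using assms(2) x by (subst ln_less_cancel_iff) auto
  hence "- B / A < ln x" by simp
  thus ?thesis using assms(1) by (simp add: field_simps)
qed

lemma g_pos:
  assumes "A > 0" "exp (- B / A) < x"
  shows "gfun e A B x > 0"
proof -
  have x: "x > 0" using assms(2) exp_gt_zero[of "- B / A"] by linarith
  show ?thesis unfolding gfun_def using g_lin_pos[OF assms] x by simp
qed

lemma g_strict:
  assumes "A > 0" "e > 0" "exp (- B / A) < x" "x < y"
  shows "gfun e A B x < gfun e A B y"
proof -
  have x: "x > 0" using assms(3) by (meson exp_gt_zero less_trans)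
  have l1: "A * ln x + B > 0" using g_lin_pos[OF assms(1,3)] .
  have "ln x < ln y" using x assms(4) by simp
  hence l2: "A * ln x + B < A * ln y + B" using assms(1) by simp
  have p1: "x powr e > 0" using x by simp
  have p2: "x powr e \<le> y powr e" using x assms(2,4) by (intro powr_mono2) auto
  have "x powr e * (A * ln x + B) < x powr e * (A * ln y + B)"
    using p1 l2 by simp
  also have "\<dots> \<le> y powr e * (A * ln y + B)"
    using p2 l1 l2 by (intro mult_right_mono) auto
  finally show ?thesis unfolding gfun_def .
qed

lemma g_cont:
  assumes "x > 0"
  shows "isCont (gfun e A B) x"
  unfolding gfun_def using assms by (intro continuous_intros) auto

lemma g_surj:
  assumes "A > 0" "e > 0" "y > 0"
  shows "\<exists>s. s > exp (- B / A) \<and> gfun e A B s = y"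
proof -
  define s1 where "s1 = exp (- B / A)"
  define S where "S = exp ((y + \<bar>B\<bar>) / A + \<bar>B\<bar> / A + 1)"
  have s1p: "s1 > 0" unfolding s1_def by simp
  have "- B / A < (y + \<bar>B\<bar>) / A + \<bar>B\<bar> / A + 1"
    using assms by (simp add: divide_simps)
  hence s1S: "s1 < S" unfolding s1_def S_def by simp
  have S1: "S \<ge> 1" unfolding S_def using assms by simp
  have "A * ln S + B = y + \<bar>B\<bar> + \<bar>B\<bar> + A + B" unfolding S_def using assms
    by (simp add: field_simps)
  hence lin: "A * ln S + B \<ge> y" using assms by linarith
  have "S powr e \<ge> 1" using S1 assms by (simp add: ge_one_powr_ge_zero)
  hence "S powr e * (A * ln S + B) \<ge> 1 * (A * ln S + B)"
    using lin assms by (intro mult_right_mono) auto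
  hence "gfun e A B S \<ge> y" unfolding gfun_def using lin by simp
  moreover have "gfun e A B s1 = 0" unfolding gfun_def s1_def using assms by simp
  moreover have "continuous_on {s1..S} (gfun e A B)"
    using s1p by (intro continuous_at_imp_continuous_on ballI g_cont) auto
  ultimately obtain z where z: "s1 \<le> z" "z \<le> S" "gfun e A B z = y"
    using IVT'[of "gfun e A B" s1 y S] s1S assms by auto
  hence "z \<noteq> s1" using \<open>gfun e A B s1 = 0\<close> assms by auto
  hence "z > s1" using z by simp
  thus ?thesis using z(3) unfolding s1_def by blast
qed

lemma g_le_iff:
  assumes "A > 0" "e > 0" "exp (- B / A) < x" "exp (- B / A) < y"
  shows "gfun e A B x \<le> gfun e A B y \<longleftrightarrow> x \<le> y"
proof
  assume h: "gfun e A B x \<le> gfun e A B y"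
  show "x \<le> y"
  proof (rule ccontr)
    assume "\<not> x \<le> y"
    hence "y < x" by simp
    hence "gfun e A B y < gfun e A B x" using g_strict[OF assms(1,2,4)] by blast
    thus False using h by simp
  qed
next
  assume h: "x \<le> y"
  show "gfun e A B x \<le> gfun e A B y"
  proof (cases "x = y")
    case False
    hence "x < y" using h by simp
    thus ?thesis using g_strict[OF assms(1,2,3)] by (simp add: less_imp_le)
  qed simp
qed

lemma g_inj:
  assumes "A > 0" "e > 0" "exp (- B / A) < x" "exp (- B / A) < y" "gfun e A B x = gfun e A B y"
  shows "x = y"
  using g_le_iff[OF assms(1-4)] g_le_iff[OF assms(1,2,4,3)] assms(5) by simp

lemma ginv:
  assumes "A > 0" "e > 0" "y > 0"
  shows "ginv e A B y > exp (- B / A)" "gfun e A B (ginv e A B y) = y"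
proof -
  obtain s where s: "s > exp (- B / A)" "gfun e A B s = y" using g_surj[OF assms] by blast
  have u: "s' = s" if "s' > exp (- B / A) \<and> gfun e A B s' = y" for s'
    using g_inj[OF assms(1,2) that[THEN conjunct1] s(1)] that s(2) by simp
  have "ginv e A B y = s" unfolding ginv_def
    by (rule the_equality) (use s u in blast)+
  thus "ginv e A B y > exp (- B / A)" "gfun e A B (ginv e A B y) = y" using s by auto
qed

lemma ginv_g:
  assumes "A > 0" "e > 0" "x > exp (- B / A)"
  shows "ginv e A B (gfun e A B x) = x"
proof -
  have y: "gfun e A B x > 0" using g_pos[OF assms(1,3)] .
  note G = ginv[OF assms(1,2) y]
  show ?thesis using g_inj[OF assms(1,2) G(1) assms(3)] G(2) by simp
qed

lemma ginv_mono:
  assumes "A > 0" "e > 0" "y > 0" "y \<le> y'"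
  shows "ginv e A B y \<le> ginv e A B y'"
proof -
  have y': "y' > 0" using assms by linarith
  note G = ginv[OF assms(1,2,3)] and G' = ginv[OF assms(1,2) y']
  show ?thesis using g_le_iff[OF assms(1,2) G(1) G'(1)] G(2) G'(2) assms(4) by simp
qed

lemma ginv_cont:
  assumes "A > 0" "e > 0" "y > 0"
  shows "isCont (ginv e A B) y"
proof -
  define x where "x = ginv e A B y"
  note G = ginv[OF assms]
  have x1: "x > exp (- B / A)" using G x_def by simp
  define a where "a = (exp (- B / A) + x) / 2"
  have ea: "exp (- B / A) < a" "a < x" using x1 unfolding a_def by auto
  have "isCont (ginv e A B) (gfun e A B x)"
  proof (rule isCont_inverse_function2[of a x "x + 1"])
    show "a < x" "x < x + 1" using ea by auto
    fix z assume z: "a \<le> z" "z \<le> x + 1"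
    show "ginv e A B (gfun e A B z) = z"
      using ea z by (intro ginv_g[OF assms(1,2)]) auto
  next
    fix z assume z: "a \<le> z" "z \<le> x + 1"
    show "isCont (gfun e A B) z"
      using ea z exp_gt_zero[of "- B / A"] by (intro g_cont) linarith
  qed
  thus ?thesis using G x_def by simp
qed

lemma div_le_div:
  fixes a b c d :: real
  assumes "b > 0" "d > 0" "a * d \<le> c * b"
  shows "a / b \<le> c / d"
proof -
  have "a / b = (a * d) / (b * d)" using assms by simp
  also have "\<dots> \<le> (c * b) / (b * d)" by (rule divide_right_mono) (use assms in auto)
  also have "\<dots> = c / d" using assms by simp
  finally show ?thesis .
qed

lemma core_uniq1:
  fixes H1 H2 :: "real \<Rightarrow> real"
  assumes e: "e > 0" and A: "A1 > 0" "A2 > 0"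
    and H1m: "\<And>x y. 0 < x \<Longrightarrow> x \<le> y \<Longrightarrow> H1 x \<le> H1 y"
    and H1p: "\<And>x. x > 0 \<Longrightarrow> H1 x > 0"
    and H2m: "\<And>x y. 0 < x \<Longrightarrow> x \<le> y \<Longrightarrow> H2 x \<le> H2 y"
    and H2p: "\<And>x. x > 0 \<Longrightarrow> H2 x > 0"
    and st: "s > 0" "t > 0" "H1 (t/s) = gfun e A1 B1 s" "H2 (s/t) = gfun e A2 B2 t"
    and st': "s' > 0" "t' > 0" "H1 (t'/s') = gfun e A1 B1 s'" "H2 (s'/t') = gfun e A2 B2 t'"
    and le: "t' * s \<le> s' * t"
  shows "s = s' \<and> t = t'"
proof -
  have h1: "0 < H1 (t/s)" using st by (intro H1p) simp
  have s1: "exp (- B1 / A1) < s" using g_pos_imp[OF A(1) st(1)] h1 st(3) by simp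
  have h1': "0 < H1 (t'/s')" using st' by (intro H1p) simp
  have s1': "exp (- B1 / A1) < s'" using g_pos_imp[OF A(1) st'(1)] h1' st'(3) by simp
  have h2: "0 < H2 (s/t)" using st by (intro H2p) simp
  have t1: "exp (- B2 / A2) < t" using g_pos_imp[OF A(2) st(2)] h2 st(4) by simp
  have h2': "0 < H2 (s'/t')" using st' by (intro H2p) simp
  have t1': "exp (- B2 / A2) < t'" using g_pos_imp[OF A(2) st'(2)] h2' st'(4) by simp
  have c1: "s' * t = t * s'" by (rule mult.commute)
  have c2: "t' * s = s * t'" by (rule mult.commute)
  have "t'/s' \<le> t/s" using st'(1) st(1) by (rule div_le_div) (use le c1 in linarith)
  hence "H1 (t'/s') \<le> H1 (t/s)" using st' by (intro H1m) auto
  hence "gfun e A1 B1 s' \<le> gfun e A1 B1 s" using st(3) st'(3) by simp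
  hence ss: "s' \<le> s" using g_le_iff[OF A(1) e s1' s1] by simp
  have "s/t \<le> s'/t'" using st(2) st'(2) by (rule div_le_div) (use le c1 c2 in linarith)
  hence "H2 (s/t) \<le> H2 (s'/t')" using st by (intro H2m) auto
  hence "gfun e A2 B2 t \<le> gfun e A2 B2 t'" using st(4) st'(4) by simp
  hence tt: "t \<le> t'" using g_le_iff[OF A(2) e t1 t1'] by simp
  have "t * s \<le> t' * s" by (rule mult_right_mono[OF tt]) (use st(1) in simp)
  hence "s * t \<le> s' * t" using le by (simp only: mult.commute[of t s])
  hence "s \<le> s'" using st(2) by (rule mult_right_le_imp_le)
  hence ses: "s = s'" using ss by simp
  have "t' * s \<le> t * s" using le c1 ses by simp
  hence "t' \<le> t" using st(1) by (rule mult_right_le_imp_le)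
  thus ?thesis using ses tt by simp
qed

lemma core:
  fixes H1 H2 :: "real \<Rightarrow> real"
  assumes e: "e > 0" and A: "A1 > 0" "A2 > 0"
    and H1c: "\<And>x. x > 0 \<Longrightarrow> isCont H1 x"
    and H1m: "\<And>x y. 0 < x \<Longrightarrow> x \<le> y \<Longrightarrow> H1 x \<le> H1 y"
    and H1p: "\<And>x. x > 0 \<Longrightarrow> H1 x > 0"
    and H2c: "\<And>x. x > 0 \<Longrightarrow> isCont H2 x"
    and H2m: "\<And>x y. 0 < x \<Longrightarrow> x \<le> y \<Longrightarrow> H2 x \<le> H2 y"
    and H2p: "\<And>x. x > 0 \<Longrightarrow> H2 x > 0"
  shows "\<exists>!(s, t). s > 0 \<and> t > 0 \<and> H1 (t/s) = gfun e A1 B1 s \<and> H2 (s/t) = gfun e A2 B2 t"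
proof -
  define \<sigma> where "\<sigma> = (\<lambda>\<rho>. ginv e A1 B1 (H1 \<rho>))"
  define \<tau> where "\<tau> = (\<lambda>\<rho>. ginv e A2 B2 (H2 (1 / \<rho>)))"
  define \<Phi> where "\<Phi> = (\<lambda>\<rho>. \<tau> \<rho> - \<rho> * \<sigma> \<rho>)"
  define s1 where "s1 = exp (- B1 / A1)"
  define t1 where "t1 = exp (- B2 / A2)"
  have s1p: "s1 > 0" and t1p: "t1 > 0" unfolding s1_def t1_def by auto
  have sig: "\<sigma> \<rho> > s1" "gfun e A1 B1 (\<sigma> \<rho>) = H1 \<rho>" if "\<rho> > 0" for \<rho>
    using ginv[OF A(1) e H1p[OF that]] unfolding \<sigma>_def s1_def by auto
  have tau: "\<tau> \<rho> > t1" "gfun e A2 B2 (\<tau> \<rho>) = H2 (1/\<rho>)" if "\<rho> > 0" for \<rho>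
    using ginv[OF A(2) e H2p] that unfolding \<tau>_def t1_def by auto
  have sigm: "\<sigma> x \<le> \<sigma> y" if "0 < x" "x \<le> y" for x y
    unfolding \<sigma>_def using that by (intro ginv_mono[OF A(1) e] H1p H1m) auto
  have taum: "\<tau> y \<le> \<tau> x" if "0 < x" "x \<le> y" for x y
    unfolding \<tau>_def using that by (intro ginv_mono[OF A(2) e] H2p H2m) (auto simp: divide_simps)
  have sigc: "isCont \<sigma> x" if "x > 0" for x
    unfolding \<sigma>_def by (rule isCont_o2[OF H1c[OF that] ginv_cont[OF A(1) e H1p[OF that]]])
  have tauc: "isCont \<tau> x" if "x > 0" for x
  proof -
    have x1: "1 / x > 0" using that by simp
    have c1: "isCont (\<lambda>\<rho>. 1 / \<rho>) x" using that by (intro continuous_intros) auto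
    have c2: "isCont (\<lambda>\<rho>. H2 (1 / \<rho>)) x" by (rule isCont_o2[OF c1 H2c[OF x1]])
    show ?thesis unfolding \<tau>_def by (rule isCont_o2[OF c2 ginv_cont[OF A(2) e H2p[OF x1]]])
  qed
  have Phic: "isCont \<Phi> x" if "x > 0" for x
    unfolding \<Phi>_def using sigc[OF that] tauc[OF that] by (intro continuous_intros) auto
  define ra where "ra = min 1 (t1 / \<sigma> 1)"
  have s1pos: "\<sigma> 1 > 0" using sig(1)[of 1] s1p by simp
  have rap: "ra > 0" unfolding ra_def using t1p s1pos by simp
  have ra1: "ra \<le> 1" unfolding ra_def by simp
  have "ra * \<sigma> ra \<le> ra * \<sigma> 1" using sigm[OF rap ra1] rap by simp
  also have "\<dots> \<le> (t1 / \<sigma> 1) * \<sigma> 1" using s1pos unfolding ra_def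
    by (intro mult_right_mono) auto
  also have "\<dots> = t1" using s1pos by simp
  finally have "\<Phi> ra > 0" unfolding \<Phi>_def using tau(1)[OF rap] by simp
  define rb where "rb = max 1 (\<tau> 1 / s1) + 1"
  have rb1: "rb > 1" unfolding rb_def by simp
  have "\<tau> rb \<le> \<tau> 1" using taum[of 1 rb] rb1 by simp
  also have "\<tau> 1 < rb * s1"
  proof -
    have "\<tau> 1 = s1 * (\<tau> 1 / s1)" using s1p by simp
    also have "\<dots> \<le> s1 * max 1 (\<tau> 1 / s1)" using s1p by (intro mult_left_mono) auto
    also have "\<dots> < rb * s1" unfolding rb_def using s1p by (simp add: algebra_simps)
    finally show ?thesis .
  qed
  also have "rb * s1 \<le> rb * \<sigma> rb" using sig(1)[of rb] rb1 by simp
  finally have "\<Phi> rb < 0" unfolding \<Phi>_def by simp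
  obtain r0 where r0: "ra \<le> r0" "r0 \<le> rb" "\<Phi> r0 = 0"
    using IVT2[of \<Phi> rb 0 ra] \<open>\<Phi> ra > 0\<close> \<open>\<Phi> rb < 0\<close> ra1 rb1 rap Phic by force
  have r0p: "r0 > 0" using r0 rap by simp
  define s0 where "s0 = \<sigma> r0"
  define t0 where "t0 = \<tau> r0"
  have s0p: "s0 > 0" using sig(1)[OF r0p] s1p unfolding s0_def by simp
  have t0p: "t0 > 0" using tau(1)[OF r0p] t1p unfolding t0_def by simp
  have t0e: "t0 = r0 * s0" using r0(3) unfolding \<Phi>_def t0_def s0_def by simp
  have E1: "H1 (t0/s0) = gfun e A1 B1 s0" using sig(2)[OF r0p] t0e s0p unfolding s0_def by simp
  have E2: "H2 (s0/t0) = gfun e A2 B2 t0" using tau(2)[OF r0p] t0e s0p unfolding t0_def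
    by (simp add: t0_def[symmetric])
  show ?thesis
  proof (rule ex1I[of _ "(s0, t0)"])
    show "case (s0, t0) of (s, t) \<Rightarrow> s > 0 \<and> t > 0 \<and> H1 (t/s) = gfun e A1 B1 s \<and> H2 (s/t) = gfun e A2 B2 t"
      using s0p t0p E1 E2 by simp
  next
    fix y assume "case y of (s, t) \<Rightarrow> s > 0 \<and> t > 0 \<and> H1 (t/s) = gfun e A1 B1 s \<and> H2 (s/t) = gfun e A2 B2 t"
    then obtain s t where y: "y = (s, t)" and st: "s > 0" "t > 0" "H1 (t/s) = gfun e A1 B1 s" "H2 (s/t) = gfun e A2 B2 t"
      by (cases y) auto
    have "s0 = s \<and> t0 = t"
    proof (cases "t * s0 \<le> s * t0")
      case True
      show ?thesis using core_uniq1[OF e A H1m H1p H2m H2p s0p t0p E1 E2 st True] by simp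
    next
      case False
      hence "t0 * s \<le> s0 * t" by (simp add: mult.commute)
      thus ?thesis using core_uniq1[OF e A H1m H1p H2m H2p st s0p t0p E1 E2] by simp
    qed
    thus "y = (s0, t0)" using y by simp
  qed
qed

lemma Lbound:
  fixes X Y \<rho> R a m :: real
  assumes "X \<ge> 0" "Y \<ge> 0" "0 \<le> \<rho>" "\<rho> \<le> R" "a \<ge> 0" "m \<ge> 0"
  shows "a * X * (X + \<rho> * Y) powr m \<le> (max 1 R) powr m * (a * (X + Y) powr (m + 1))"
proof -
  define K where "K = max 1 R"
  have K: "K \<ge> 1" unfolding K_def by simp
  have "\<rho> * Y \<le> K * Y" using assms unfolding K_def by (intro mult_right_mono) auto
  moreover have "X \<le> K * X" using K assms by (simp add: mult_le_cancel_right1)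
  ultimately have h: "X + \<rho> * Y \<le> K * (X + Y)" by (simp add: distrib_left)
  have "(X + \<rho> * Y) powr m \<le> (K * (X + Y)) powr m"
    using h assms by (intro powr_mono2) auto
  also have "\<dots> = K powr m * (X + Y) powr m" using K assms by (simp add: powr_mult)
  finally have h2: "(X + \<rho> * Y) powr m \<le> K powr m * (X + Y) powr m" .
  have "a * X * (X + \<rho> * Y) powr m \<le> a * (X + Y) * (K powr m * (X + Y) powr m)"
    using assms h2 by (intro mult_mono) auto
  also have "\<dots> = K powr m * (a * ((X + Y) powr (m + 1 - 1) * \<bar>X + Y\<bar>))"
    using assms by (simp add: algebra_simps)
  also have "\<dots> = K powr m * (a * (X + Y) powr (m + 1))"
    using pw1[of "X + Y" "m + 1"] assms by simp
  finally show ?thesis unfolding K_def .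
qed

locale setting =
  fixes a b c :: "int \<Rightarrow> real" and p q r b0 :: real
  assumes hp: "1 < p" and hpq: "p < q" and hr: "r \<ge> 1"
    and ha: "\<And>n. a n > 0" and hb: "\<And>n. b n > 0" and hc: "\<And>n. c n > 0"
    and b0: "b0 > 0" and hb0: "\<And>n. b n \<ge> b0" and csum: "c summable_on UNIV"
begin

definition L1 where "L1 u \<rho> = (\<Sum>\<^sub>\<infinity>n. a n * Xp u n * (Xp u n + \<rho> * Yn u n) powr (p - 1))"
definition beta where "beta u = (\<Sum>\<^sub>\<infinity>n. b n * Pp u n powr p)"
definition Ac where "Ac u = (\<Sum>\<^sub>\<infinity>n. c n * Pp u n powr q)"
definition Bc where "Bc u = (\<Sum>\<^sub>\<infinity>n. c n * Pp u n powr q * ln (Pp u n powr r))"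

lemma a_nn: "0 \<le> a n * \<bar>x\<bar> powr e" using ha[of n] by simp
lemma b_nn: "0 \<le> b n * \<bar>x\<bar> powr e" using hb[of n] by simp

lemma E_parts:
  assumes "u \<in> spaceE a b p"
  shows "(\<lambda>n. a n * \<bar>fdiff u n\<bar> powr p) summable_on UNIV"
    "(\<lambda>n. b n * \<bar>u n\<bar> powr p) summable_on UNIV"
proof -
  have S: "(\<lambda>n. a n * \<bar>fdiff u n\<bar> powr p + b n * \<bar>u n\<bar> powr p) summable_on UNIV"
    using assms unfolding spaceE_def by simp
  show "(\<lambda>n. a n * \<bar>fdiff u n\<bar> powr p) summable_on UNIV"
    by (rule summable_on_comparison_test[OF S]) (simp_all add: a_nn b_nn)
  show "(\<lambda>n. b n * \<bar>u n\<bar> powr p) summable_on UNIV"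
    by (rule summable_on_comparison_test[OF S]) (simp_all add: a_nn b_nn)
qed

lemma single_le:
  fixes f :: "int \<Rightarrow> real"
  assumes "f summable_on UNIV" "\<And>n. f n \<ge> 0"
  shows "f n \<le> (\<Sum>\<^sub>\<infinity>n. f n)"
proof -
  have "infsum f {n} \<le> infsum f UNIV"
    by (rule infsum_mono_neutral) (use assms in auto)
  thus ?thesis by simp
qed

lemma bounded:
  assumes "u \<in> spaceE a b p"
  obtains M where "M \<ge> 0" "\<And>n. \<bar>u n\<bar> \<le> M"
proof -
  define S where "S = (\<Sum>\<^sub>\<infinity>n. b n * \<bar>u n\<bar> powr p)"
  have h: "b n * \<bar>u n\<bar> powr p \<le> S" for n
    unfolding S_def by (rule single_le[OF E_parts(2)[OF assms]]) (rule b_nn)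
  have h2: "\<bar>u n\<bar> powr p \<le> S / b0" for n
  proof -
    have "b0 * \<bar>u n\<bar> powr p \<le> b n * \<bar>u n\<bar> powr p" using hb0[of n] by (intro mult_right_mono) auto
    thus ?thesis using h[of n] b0 by (simp add: field_simps)
  qed
  have S0: "S / b0 \<ge> 0" using h2[of 0] powr_ge_zero[of "\<bar>u 0\<bar>" p] by linarith
  show ?thesis
  proof
    show "(S / b0) powr (1 / p) \<ge> 0" by simp
    fix n
    have "\<bar>u n\<bar> = (\<bar>u n\<bar> powr p) powr (1 / p)" using hp by (simp add: powr_powr)
    also have "\<dots> \<le> (S / b0) powr (1 / p)" using h2[of n] hp by (intro powr_mono2) auto
    finally show "\<bar>u n\<bar> \<le> (S / b0) powr (1 / p)" .
  qed
qed

lemma Pp_le: "Pp u n \<le> \<bar>u n\<bar>" unfolding Pp_def pos_part_def by simp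

lemma summable_beta:
  assumes "u \<in> spaceE a b p"
  shows "(\<lambda>n. b n * Pp u n powr p) summable_on UNIV"
proof (rule summable_on_comparison_test[OF E_parts(2)[OF assms]])
  fix n
  show "b n * Pp u n powr p \<le> b n * \<bar>u n\<bar> powr p"
    using hb[of n] hp Pp_nonneg[of u n] Pp_le[of u n] by (intro mult_left_mono powr_mono2) auto
  show "0 \<le> b n * Pp u n powr p" using hb[of n] by simp
qed

lemma summable_A:
  assumes "u \<in> spaceE a b p"
  shows "(\<lambda>n. c n * Pp u n powr q) summable_on UNIV"
proof -
  obtain M where M: "M \<ge> 0" "\<And>n. \<bar>u n\<bar> \<le> M" using bounded[OF assms] by blast
  show ?thesis
  proof (rule summable_on_comparison_test[OF summable_on_cmult_left[OF csum, of "M powr q"]])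
    fix n
    show "c n * Pp u n powr q \<le> c n * M powr q"
      using hc[of n] hp hpq Pp_nonneg[of u n] Pp_le[of u n] M(2)[of n]
      by (intro mult_left_mono powr_mono2) auto
    show "0 \<le> c n * Pp u n powr q" using hc[of n] by simp
  qed
qed

lemma summable_B:
  assumes "u \<in> spaceD a b c p q r"
  shows "(\<lambda>n. c n * Pp u n powr q * ln (Pp u n powr r)) summable_on UNIV"
proof -
  have S: "(\<lambda>n. c n * \<bar>u n\<bar> powr q * ln (\<bar>u n\<bar> powr r)) summable_on UNIV"
    using assms unfolding spaceD_def by simp
  have S': "(\<lambda>n. norm (c n * \<bar>u n\<bar> powr q * ln (\<bar>u n\<bar> powr r))) summable_on UNIV"
    by (rule summable_on_iff_abs_summable_on_real[THEN iffD1, OF S])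
  have "(\<lambda>n. norm (c n * Pp u n powr q * ln (Pp u n powr r))) summable_on UNIV"
  proof (rule summable_on_comparison_test[OF S'])
    fix n
    show "norm (c n * Pp u n powr q * ln (Pp u n powr r)) \<le> norm (c n * \<bar>u n\<bar> powr q * ln (\<bar>u n\<bar> powr r))"
    proof (cases "u n > 0")
      case True
      hence "Pp u n = \<bar>u n\<bar>" unfolding Pp_def pos_part_def by simp
      thus ?thesis by simp
    next
      case False
      hence "Pp u n = 0" unfolding Pp_def pos_part_def by simp
      thus ?thesis by simp
    qed
    show "0 \<le> norm (c n * Pp u n powr q * ln (Pp u n powr r))" by simp
  qed
  thus ?thesis by (rule abs_summable_summable)
qed

lemma L_bound:
  assumes "0 \<le> \<rho>" "\<rho> \<le> R"
  shows "a n * Xp u n * (Xp u n + \<rho> * Yn u n) powr (p - 1) \<le> (max 1 R) powr (p - 1) * (a n * \<bar>fdiff u n\<bar> powr p)"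
  using Lbound[of "Xp u n" "Yn u n" \<rho> R "a n" "p - 1"] assms hp ha[of n]
  unfolding abs_fdiff_u by (simp add: Xp_def Yn_def less_imp_le)

lemma L_nonneg: "0 \<le> \<rho> \<Longrightarrow> 0 \<le> a n * Xp u n * (Xp u n + \<rho> * Yn u n) powr (p - 1)"
  using ha[of n] by (simp add: Xp_def Yn_def less_imp_le)

lemma summable_L:
  assumes "u \<in> spaceE a b p" "0 \<le> \<rho>"
  shows "(\<lambda>n. a n * Xp u n * (Xp u n + \<rho> * Yn u n) powr (p - 1)) summable_on UNIV"
  by (rule summable_on_comparison_test[OF summable_on_cmult_right[OF E_parts(1)[OF assms(1)], of "(max 1 \<rho>) powr (p - 1)"]])
     (use L_bound L_nonneg assms in auto)

lemma L1_nonneg: "0 \<le> \<rho> \<Longrightarrow> L1 u \<rho> \<ge> 0"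
  unfolding L1_def by (intro infsum_nonneg L_nonneg)

lemma L1_mono:
  assumes "u \<in> spaceE a b p" "0 \<le> x" "x \<le> y"
  shows "L1 u x \<le> L1 u y"
  unfolding L1_def
proof (rule infsum_mono[OF summable_L[OF assms(1,2)] summable_L[OF assms(1)]])
  show "0 \<le> y" using assms by simp
  fix n
  have "(Xp u n + x * Yn u n) powr (p - 1) \<le> (Xp u n + y * Yn u n) powr (p - 1)"
    using assms hp by (intro powr_mono2) (auto simp: Xp_def Yn_def intro!: mult_right_mono)
  thus "a n * Xp u n * (Xp u n + x * Yn u n) powr (p - 1) \<le> a n * Xp u n * (Xp u n + y * Yn u n) powr (p - 1)"
    using ha[of n] by (intro mult_left_mono) (auto simp: Xp_def less_imp_le)
qed

lemma L1_cont_on: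
  assumes "u \<in> spaceE a b p" "R > 0"
  shows "continuous_on {0..R} (L1 u)"
proof -
  define f where "f = (\<lambda>n \<rho>. a n * Xp u n * (Xp u n + \<rho> * Yn u n) powr (p - 1))"
  have ul: "uniform_limit {0..R} (\<lambda>X y. \<Sum>x\<in>X. f x y) (\<lambda>y. \<Sum>\<^sub>\<infinity>x\<in>UNIV. f x y) (finite_subsets_at_top UNIV)"
  proof (rule Weierstrass_m_test_general[where M = "\<lambda>n. (max 1 R) powr (p - 1) * (a n * \<bar>fdiff u n\<bar> powr p)"])
    fix x y assume "x \<in> (UNIV :: int set)" "y \<in> {0..R}"
    thus "norm (f x y) \<le> (max 1 R) powr (p - 1) * (a x * \<bar>fdiff u x\<bar> powr p)"
      unfolding f_def using L_bound L_nonneg by auto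
  next
    show "(\<lambda>n. (max 1 R) powr (p - 1) * (a n * \<bar>fdiff u n\<bar> powr p)) summable_on UNIV"
      by (rule summable_on_cmult_right[OF E_parts(1)[OF assms(1)]])
  qed
  have "continuous_on {0..R} (\<lambda>y. \<Sum>\<^sub>\<infinity>x\<in>UNIV. f x y)"
  proof (rule uniform_limit_theorem[OF _ ul])
    show "\<forall>\<^sub>F X in finite_subsets_at_top UNIV. continuous_on {0..R} (\<lambda>y. \<Sum>x\<in>X. f x y)"
    proof (rule eventually_finite_subsets_at_top_weakI)
      fix X :: "int set"
      show "continuous_on {0..R} (\<lambda>y. \<Sum>x\<in>X. f x y)"
      proof (rule continuous_on_sum)
        fix n
        have c1: "continuous_on {0..R} (\<lambda>\<rho>. Xp u n + \<rho> * Yn u n)"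
          by (rule continuous_on_add[OF continuous_on_const continuous_on_mult_right[OF continuous_on_id]])
        have c2: "continuous_on {0..R} (\<lambda>\<rho>. (Xp u n + \<rho> * Yn u n) powr (p - 1))"
          by (rule continuous_on_powr'[OF c1 continuous_on_const]) (use hp in \<open>auto simp: Xp_def Yn_def\<close>)
        show "continuous_on {0..R} (f n)" unfolding f_def
          by (rule continuous_on_mult_left[OF c2])
      qed
    qed
    show "\<not> trivial_limit (finite_subsets_at_top (UNIV :: int set))" by simp
  qed
  thus ?thesis unfolding f_def L1_def .
qed

lemma L1_cont:
  assumes "u \<in> spaceE a b p" "x > 0"
  shows "isCont (L1 u) x"
  using L1_cont_on[OF assms(1), of "x + 1"] assms(2)
  by (intro continuous_on_interior[of "{0..x+1}"]) auto

lemma beta_pos: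
  assumes "u \<in> spaceE a b p" "pos_part u \<noteq> (\<lambda>_. 0)"
  shows "beta u > 0"
proof -
  obtain n where "pos_part u n \<noteq> 0" using assms(2) by auto
  hence pn: "Pp u n > 0" using Pp_nonneg[of u n] unfolding Pp_def by simp
  have "0 < b n * Pp u n powr p" using pn hb[of n] by simp
  also have "\<dots> \<le> beta u" unfolding beta_def
    by (rule single_le[OF summable_beta[OF assms(1)]]) (use hb in \<open>simp add: less_imp_le\<close>)
  finally show ?thesis .
qed

lemma Ac_pos:
  assumes "u \<in> spaceE a b p" "pos_part u \<noteq> (\<lambda>_. 0)"
  shows "Ac u > 0"
proof -
  obtain n where "pos_part u n \<noteq> 0" using assms(2) by auto
  hence pn: "Pp u n > 0" using Pp_nonneg[of u n] unfolding Pp_def by simp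
  have "0 < c n * Pp u n powr q" using pn hc[of n] by simp
  also have "\<dots> \<le> Ac u" unfolding Ac_def
    by (rule single_le[OF summable_A[OF assms(1)]]) (use hc in \<open>simp add: less_imp_le\<close>)
  finally show ?thesis .
qed

end

lemma fdiff_neg: "fdiff (\<lambda>n. - u n) n = - fdiff u n" unfolding fdiff_def by simp

lemma abs_wst: "s \<ge> 0 \<Longrightarrow> t \<ge> 0 \<Longrightarrow> \<bar>wst u s t n\<bar> \<le> max s t * \<bar>u n\<bar>"
proof (cases "u n \<ge> 0")
  case True
  assume st: "s \<ge> 0" "t \<ge> 0"
  have "wst u s t n = s * u n" using True unfolding wst_def pos_part_def neg_part_def by simp
  thus ?thesis using True st by (simp add: abs_mult mult_right_mono)
next
  case False
  assume st: "s \<ge> 0" "t \<ge> 0"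
  have "wst u s t n = t * u n" using False unfolding wst_def pos_part_def neg_part_def by simp
  thus ?thesis using False st by (simp add: abs_mult mult_right_mono)
qed

context setting
begin

lemma neg_spaceD:
  assumes "u \<in> spaceD a b c p q r"
  shows "(\<lambda>n. - u n) \<in> spaceD a b c p q r"
  using assms unfolding spaceD_def spaceE_def by (simp add: fdiff_neg)

lemma formula:
  assumes uD: "u \<in> spaceD a b c p q r" and s: "s > 0" and t: "t > 0"
  shows "dI a b c p q r (wst u s t) (pos_part (wst u s t))
       = s powr p * (L1 u (t/s) + beta u - gfun (q - p) (r * Ac u) (Bc u) s)"
proof -
  have uE: "u \<in> spaceE a b p" using uD unfolding spaceD_def by simp
  define f1 where "f1 = (\<lambda>n. a n * Xp u n * (s * Xp u n + t * Yn u n) powr (p - 1))"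
  have f1eq: "f1 = (\<lambda>n. s powr (p - 1) * (a n * Xp u n * (Xp u n + (t / s) * Yn u n) powr (p - 1)))"
  proof (rule ext)
    fix n
    have "s * Xp u n + t * Yn u n = s * (Xp u n + (t / s) * Yn u n)" using s by (simp add: field_simps)
    moreover have "(s * (Xp u n + (t / s) * Yn u n)) powr (p - 1) = s powr (p - 1) * (Xp u n + (t / s) * Yn u n) powr (p - 1)"
      by (rule powr_mult; use s t in \<open>simp add: Xp_def Yn_def\<close>)
    ultimately have "(s * Xp u n + t * Yn u n) powr (p - 1) = s powr (p - 1) * (Xp u n + (t / s) * Yn u n) powr (p - 1)"
      by (simp only:)
    thus "f1 n = s powr (p - 1) * (a n * Xp u n * (Xp u n + (t / s) * Yn u n) powr (p - 1))"
      unfolding f1_def by simp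
  qed
  have ts: "0 \<le> t / s" using s t by simp
  have sf1: "f1 summable_on UNIV" unfolding f1eq
    by (rule summable_on_cmult_right[OF summable_L[OF uE ts]])
  have If1: "infsum f1 UNIV = s powr (p - 1) * L1 u (t / s)" unfolding f1eq L1_def
    by (rule infsum_cmult_right) (rule summable_L[OF uE ts])
  have I1: "(\<Sum>\<^sub>\<infinity>n. s * f1 n + s powr p * (b n * Pp u n powr p)) = s * infsum f1 UNIV + s powr p * beta u"
    unfolding beta_def
    by (subst infsum_add[OF summable_on_cmult_right[OF sf1] summable_on_cmult_right[OF summable_beta[OF uE]]])
       (simp add: infsum_cmult_right[OF sf1] infsum_cmult_right[OF summable_beta[OF uE]])
  have sA: "(\<lambda>n. c n * Pp u n powr q) summable_on UNIV" by (rule summable_A[OF uE])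
  have sB: "(\<lambda>n. c n * Pp u n powr q * ln (Pp u n powr r)) summable_on UNIV" by (rule summable_B[OF uD])
  have sAB: "(\<lambda>n. r * ln s * (c n * Pp u n powr q) + c n * Pp u n powr q * ln (Pp u n powr r)) summable_on UNIV"
    by (rule summable_on_add[OF summable_on_cmult_right[OF sA] sB])
  have I2: "(\<Sum>\<^sub>\<infinity>n. s powr q * (r * ln s * (c n * Pp u n powr q) + c n * Pp u n powr q * ln (Pp u n powr r)))
      = s powr q * (r * ln s * Ac u + Bc u)"
    unfolding Ac_def Bc_def infsum_cmult_right[OF sAB]
    by (subst infsum_add[OF summable_on_cmult_right[OF sA] sB]) (simp add: infsum_cmult_right[OF sA])
  have "dI a b c p q r (wst u s t) (pos_part (wst u s t))
      = (s * infsum f1 UNIV + s powr p * beta u) - s powr q * (r * ln s * Ac u + Bc u)"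
  proof -
    have f1n: "a n * Xp u n * (s * Xp u n + t * Yn u n) powr (p - 1) = f1 n" for n by (simp add: f1_def)
    show ?thesis unfolding dI_def term1[OF s t] term2[OF s t] I2 f1n I1 ..
  qed
  also have "\<dots> = s powr p * (L1 u (t/s) + beta u - gfun (q - p) (r * Ac u) (Bc u) s)"
  proof -
    have sp1: "s * s powr (p - 1) = s powr p"
    proof -
      have "s powr 1 * s powr (p - 1) = s powr (1 + (p - 1))" by (rule powr_add[symmetric])
      thus ?thesis using s by simp
    qed
    have sq: "s powr q = s powr p * s powr (q - p)"
    proof -
      have "s powr (p + (q - p)) = s powr p * s powr (q - p)" by (rule powr_add)
      thus ?thesis by simp
    qed
    show ?thesis unfolding If1 gfun_def sq sp1[symmetric] by (simp add: algebra_simps)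
  qed
  finally show ?thesis .
qed

lemma wst_spaceD:
  assumes uD: "u \<in> spaceD a b c p q r" and s: "s > 0" and t: "t > 0"
  shows "wst u s t \<in> spaceD a b c p q r"
proof -
  have uE: "u \<in> spaceE a b p" using uD unfolding spaceD_def by simp
  define K where "K = max s t"
  have K: "K > 0" unfolding K_def using s by simp
  have SE: "(\<lambda>n. a n * \<bar>fdiff u n\<bar> powr p + b n * \<bar>u n\<bar> powr p) summable_on UNIV"
    using uE unfolding spaceE_def by simp
  have wE: "wst u s t \<in> spaceE a b p"
    unfolding spaceE_def mem_Collect_eq
  proof (rule summable_on_comparison_test[OF summable_on_cmult_right[OF SE, of "K powr p"]])
    fix n
    have d: "\<bar>fdiff (wst u s t) n\<bar> \<le> K * \<bar>fdiff u n\<bar>"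
    proof -
      have "s * Xp u n \<le> K * Xp u n" "t * Yn u n \<le> K * Yn u n" unfolding K_def
        by (auto intro!: mult_right_mono simp: Xp_def Yn_def)
      thus ?thesis unfolding abs_fdiff_wst[OF less_imp_le[OF s] less_imp_le[OF t]] abs_fdiff_u[of u n]
        by (simp add: distrib_left)
    qed
    have w: "\<bar>wst u s t n\<bar> \<le> K * \<bar>u n\<bar>" unfolding K_def using abs_wst s t by simp
    have "\<bar>fdiff (wst u s t) n\<bar> powr p \<le> (K * \<bar>fdiff u n\<bar>) powr p" using d hp by (intro powr_mono2) auto
    also have "\<dots> = K powr p * \<bar>fdiff u n\<bar> powr p" using K by (simp add: powr_mult)
    finally have d2: "\<bar>fdiff (wst u s t) n\<bar> powr p \<le> K powr p * \<bar>fdiff u n\<bar> powr p" .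
    have "\<bar>wst u s t n\<bar> powr p \<le> (K * \<bar>u n\<bar>) powr p" using w hp by (intro powr_mono2) auto
    also have "\<dots> = K powr p * \<bar>u n\<bar> powr p" using K by (simp add: powr_mult)
    finally have w2: "\<bar>wst u s t n\<bar> powr p \<le> K powr p * \<bar>u n\<bar> powr p" .
    have "a n * \<bar>fdiff (wst u s t) n\<bar> powr p \<le> a n * (K powr p * \<bar>fdiff u n\<bar> powr p)"
      using d2 ha[of n] by (intro mult_left_mono) auto
    moreover have "b n * \<bar>wst u s t n\<bar> powr p \<le> b n * (K powr p * \<bar>u n\<bar> powr p)"
      using w2 hb[of n] by (intro mult_left_mono) auto
    ultimately show "a n * \<bar>fdiff (wst u s t) n\<bar> powr p + b n * \<bar>wst u s t n\<bar> powr p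
        \<le> K powr p * (a n * \<bar>fdiff u n\<bar> powr p + b n * \<bar>u n\<bar> powr p)"
      by (simp add: algebra_simps)
    show "0 \<le> a n * \<bar>fdiff (wst u s t) n\<bar> powr p + b n * \<bar>wst u s t n\<bar> powr p"
      using ha[of n] hb[of n] by (simp add: less_imp_le)
  qed
  define u' where "u' = (\<lambda>n. - u n)"
  have u'D: "u' \<in> spaceD a b c p q r" unfolding u'_def by (rule neg_spaceD[OF uD])
  have u'E: "u' \<in> spaceE a b p" using u'D unfolding spaceD_def by simp
  define T where "T = (\<lambda>(v::int\<Rightarrow>real) s n. s powr q * (r * ln s * (c n * Pp v n powr q) + c n * Pp v n powr q * ln (Pp v n powr r)))"
  have sT: "(\<lambda>n. T v s n) summable_on UNIV" if "v \<in> spaceD a b c p q r" for v s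
  proof -
    have vE: "v \<in> spaceE a b p" using that unfolding spaceD_def by simp
    show ?thesis unfolding T_def
      by (intro summable_on_cmult_right summable_on_add summable_A[OF vE] summable_B[OF that])
  qed
  have eqn: "c n * \<bar>wst u s t n\<bar> powr q * ln (\<bar>wst u s t n\<bar> powr r) = T u s n + T u' t n" for n
  proof -
    define w where "w = wst u s t"
    have 1: "c n * \<bar>w n\<bar> powr (q - 2) * w n * pos_part w n * ln (\<bar>w n\<bar> powr r) = T u s n"
      unfolding w_def T_def by (simp only: term2[OF s t] split_conv)
    have ww: "wst u' t s = (\<lambda>n. - w n)" unfolding u'_def w_def by (rule wst_neg)
    have "c n * \<bar>wst u' t s n\<bar> powr (q - 2) * wst u' t s n * pos_part (wst u' t s) n * ln (\<bar>wst u' t s n\<bar> powr r) = T u' t n"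
      unfolding T_def by (simp only: term2[OF t s] split_conv)
    hence 2: "c n * \<bar>w n\<bar> powr (q - 2) * w n * neg_part w n * ln (\<bar>w n\<bar> powr r) = T u' t n"
      unfolding ww neg_fun_pos by simp
    have pn: "pos_part w n + neg_part w n = w n" unfolding pos_part_def neg_part_def by (simp add: max_def min_def)
    have "c n * \<bar>w n\<bar> powr q * ln (\<bar>w n\<bar> powr r) = c n * (\<bar>w n\<bar> powr (q - 2) * w n * w n) * ln (\<bar>w n\<bar> powr r)"
      by (simp only: pw2)
    also have "\<dots> = c n * \<bar>w n\<bar> powr (q - 2) * w n * pos_part w n * ln (\<bar>w n\<bar> powr r)
        + c n * \<bar>w n\<bar> powr (q - 2) * w n * neg_part w n * ln (\<bar>w n\<bar> powr r)"
      unfolding pn[symmetric] by (simp add: algebra_simps)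
    also have "\<dots> = T u s n + T u' t n" unfolding 1 2 ..
    finally show ?thesis unfolding w_def .
  qed
  have "(\<lambda>n. c n * \<bar>wst u s t n\<bar> powr q * ln (\<bar>wst u s t n\<bar> powr r)) summable_on UNIV"
    unfolding eqn by (intro summable_on_add sT uD u'D)
  thus ?thesis using wE unfolding spaceD_def by simp
qed

end

theorem lemma2p7:
  fixes a b c :: "int \<Rightarrow> real" and p q r :: real and u :: "int \<Rightarrow> real"
  assumes hp: "1 < p" and hpq: "p < q" and hp2: "\<exists>k::nat. k > 0 \<and> p / 2 = real k"
    and hr: "r \<ge> 1"
    and ha: "\<And>n. a n > 0" and hb: "\<And>n. b n > 0" and hc: "\<And>n. c n > 0"
    and C1: "\<exists>b0>0. \<forall>n. b n \<ge> b0"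
    and C1': "filterlim b at_top at_top" and C1'': "filterlim b at_top at_bot"
    and C2: "\<exists>c0>0. \<forall>n. c n \<le> c0"
    and C2': "c summable_on UNIV"
    and hu: "u \<in> spaceD a b c p q r"
    and hup: "pos_part u \<noteq> (\<lambda>_. 0)" and hun: "neg_part u \<noteq> (\<lambda>_. 0)"
  shows "\<exists>!(s0, t0). s0 > 0 \<and> t0 > 0 \<and>
           (\<lambda>n. s0 * pos_part u n + t0 * neg_part u n) \<in> nehariM a b c p q r"
proof -
  obtain b0 where b0: "b0 > 0" "\<forall>n. b n \<ge> b0" using C1 by blast
  interpret S: setting a b c p q r b0
    by unfold_locales (use assms b0 in auto)
  define u' where "u' = (\<lambda>n. - u n)"
  have u'D: "u' \<in> spaceD a b c p q r" unfolding u'_def by (rule S.neg_spaceD[OF hu])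
  have uE: "u \<in> spaceE a b p" using hu unfolding spaceD_def by simp
  have u'E: "u' \<in> spaceE a b p" using u'D unfolding spaceD_def by simp
  have hup': "pos_part u' \<noteq> (\<lambda>_. 0)"
  proof
    assume h: "pos_part u' = (\<lambda>_. 0)"
    have "neg_part u n = 0" for n using fun_cong[OF h, of n] unfolding u'_def neg_fun_pos by simp
    hence "neg_part u = (\<lambda>_. 0)" by (simp add: fun_eq_iff)
    thus False using hun by simp
  qed
  define H1 where "H1 = (\<lambda>\<rho>. S.L1 u \<rho> + S.beta u)"
  define H2 where "H2 = (\<lambda>\<rho>. S.L1 u' \<rho> + S.beta u')"
  define e where "e = q - p"
  have A1: "r * S.Ac u > 0" using S.Ac_pos[OF uE hup] hr by simp
  have A2: "r * S.Ac u' > 0" using S.Ac_pos[OF u'E hup'] hr by simp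
  have C: "\<exists>!(s, t). s > 0 \<and> t > 0 \<and> H1 (t/s) = gfun e (r * S.Ac u) (S.Bc u) s
                   \<and> H2 (s/t) = gfun e (r * S.Ac u') (S.Bc u') t"
  proof (rule core)
    show "e > 0" unfolding e_def using hpq by simp
    show "r * S.Ac u > 0" "r * S.Ac u' > 0" using A1 A2 .
    show "isCont H1 x" if "x > 0" for x
      unfolding H1_def using S.L1_cont[OF uE that] by (intro continuous_intros)
    show "isCont H2 x" if "x > 0" for x
      unfolding H2_def using S.L1_cont[OF u'E that] by (intro continuous_intros)
    show "H1 x \<le> H1 y" if "0 < x" "x \<le> y" for x y
      unfolding H1_def using S.L1_mono[OF uE, of x y] that by simp
    show "H2 x \<le> H2 y" if "0 < x" "x \<le> y" for x y
      unfolding H2_def using S.L1_mono[OF u'E, of x y] that by simp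
    show "H1 x > 0" if "x > 0" for x
      unfolding H1_def using S.L1_nonneg[of x u] S.beta_pos[OF uE hup] that by simp
    show "H2 x > 0" if "x > 0" for x
      unfolding H2_def using S.L1_nonneg[of x u'] S.beta_pos[OF u'E hup'] that by simp
  qed
  have eq: "(s > 0 \<and> t > 0 \<and> wst u s t \<in> nehariM a b c p q r) \<longleftrightarrow>
      (s > 0 \<and> t > 0 \<and> H1 (t/s) = gfun e (r * S.Ac u) (S.Bc u) s
                   \<and> H2 (s/t) = gfun e (r * S.Ac u') (S.Bc u') t)" for s t
  proof (cases "s > 0 \<and> t > 0")
    case True
    hence s: "s > 0" and t: "t > 0" by auto
    have wD: "wst u s t \<in> spaceD a b c p q r" by (rule S.wst_spaceD[OF hu s t])
    have np: "pos_part (wst u s t) \<noteq> (\<lambda>_. 0)"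
    proof
      assume h: "pos_part (wst u s t) = (\<lambda>_. 0)"
      have "s * pos_part u n = 0" for n using fun_cong[OF h, of n] unfolding pos_wst[OF s t] by simp
      hence "pos_part u n = 0" for n using s by simp
      hence "pos_part u = (\<lambda>_. 0)" by (simp add: fun_eq_iff)
      thus False using hup by simp
    qed
    have nn: "neg_part (wst u s t) \<noteq> (\<lambda>_. 0)"
    proof
      assume h: "neg_part (wst u s t) = (\<lambda>_. 0)"
      have "t * neg_part u n = 0" for n using fun_cong[OF h, of n] unfolding neg_wst[OF s t] by simp
      hence "neg_part u n = 0" for n using t by simp
      hence "neg_part u = (\<lambda>_. 0)" by (simp add: fun_eq_iff)
      thus False using hun by simp
    qed
    have d1: "dI a b c p q r (wst u s t) (pos_part (wst u s t)) = s powr p * (H1 (t/s) - gfun e (r * S.Ac u) (S.Bc u) s)"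
      unfolding S.formula[OF hu s t] H1_def e_def by simp
    have "dI a b c p q r (wst u s t) (neg_part (wst u s t)) = dI a b c p q r (wst u' t s) (pos_part (wst u' t s))"
      unfolding dI_negpart[of a b c p q r "wst u s t"] u'_def wst_neg ..
    also have "\<dots> = t powr p * (H2 (s/t) - gfun e (r * S.Ac u') (S.Bc u') t)"
      unfolding S.formula[OF u'D t s] H2_def e_def by simp
    finally have d2: "dI a b c p q r (wst u s t) (neg_part (wst u s t)) = t powr p * (H2 (s/t) - gfun e (r * S.Ac u') (S.Bc u') t)" .
    show ?thesis unfolding nehariM_def using wD np nn s t by (simp add: d1 d2)
  qed auto
  have fold: "(\<lambda>n. s0 * pos_part u n + t0 * neg_part u n) = wst u s0 t0" for s0 t0
    unfolding wst_def ..
  show ?thesis unfolding fold eq using C .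
qed

end
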